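(* Every non-commutative BCK-algebra $\mathcal A$ of order $n$ satisfies $\operatorname{cd}(\mathcal A)\le\frac{n^2-2}{n^2}$, and for each $n\ge3$ this bound is attained: the algebra $\mathcal B_n$ defined by $\mathcal B_3=\mathcal{PI}$ and $\mathcal B_n=\mathcal B_{n-1}\sqcup\mathbf 2$ for $n>3$ is a non-commutative BCK-algebra of order $n$ with $\operatorname{cd}(\mathcal B_n)=\frac{n^2-2}{n^2}$. Consequently the equation $x\wedge y=y\wedge x$ has no finite satisfiability gap among BCK-algebras.
   Context: A BCK-algebra is a set $A$ with a binary operation $\cdot$ and a constant $0$ such that for all $x,y,z\in A$: (BCK1) $((x\cdot y)\cdot(x\cdot z))\cdot(z\cdot y)=0$; (BCK2) $(x\cdot(x\cdot y))\cdot y=0$; (BCK3) $x\cdot x=0$; (BCK4) $0\cdot x=0$; (BCK5) $x\cdot y=0$ and $y\cdot x=0$ imply $x=y$. Define $x\wedge y:=y\cdot(y\cdot x)$; the algebra is commutative if $x\wedge y=y\wedge x$ for all $x,y$. For finite $\mathcal A$, $\operatorname{cd}(\mathcal A)=|\{(x,y)\in A^2:x\wedge y=y\wedge x\}|/|A|^2$. $\mathcal{PI}$ is the BCK-algebra on $\{0,1,2\}$ with $1\cdot0=1$, $2\cdot0=2$, $2\cdot1=2$ and all other products $0$. $\mathbf 2$ is a two-element BCK-algebra $\{0,b\}$ with $b\cdot0=b$ and other products $0$, where $b$ is a new element. For BCK-algebras $\mathcal A,\mathcal B$ with $A\cap B=\{0\}$, the BCK-union $\mathcal A\sqcup\mathcal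 B$ has carrier $A\cup B$, with $x\cdot y$ computed in $\mathcal A$ if $x,y\in A$, in $\mathcal B$ if $x,y\in B$, and $x\cdot y=x$ otherwise. An equation has no finite satisfiability gap in a class if for every $\epsilon>0$ some finite member has degree of satisfiability strictly between $1-\epsilon$ and $1$. *)

theory Defs
  imports Complex_Main
begin

definition bck :: "'a set \<Rightarrow> ('a \<Rightarrow> 'a \<Rightarrow> 'a) \<Rightarrow> 'a \<Rightarrow> bool" where
  "bck A m z \<longleftrightarrow> z \<in> A \<and> (\<forall>x\<in>A. \<forall>y\<in>A. m x y \<in> A) \<and>
     (\<forall>x\<in>A. \<forall>y\<in>A. \<forall>w\<in>A. m (m (m x y) (m x w)) (m w y) = z) \<and>
     (\<forall>x\<in>A. \<forall>y\<in>A. m (m x (m x y)) y = z) \<and>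
     (\<forall>x\<in>A. m x x = z) \<and>
     (\<forall>x\<in>A. m z x = z) \<and>
     (\<forall>x\<in>A. \<forall>y\<in>A. m x y = z \<and> m y x = z \<longrightarrow> x = y)"

definition meet :: "('a \<Rightarrow> 'a \<Rightarrow> 'a) \<Rightarrow> 'a \<Rightarrow> 'a \<Rightarrow> 'a" where
  "meet m x y = m y (m y x)"

definition commutative :: "'a set \<Rightarrow> ('a \<Rightarrow> 'a \<Rightarrow> 'a) \<Rightarrow> bool" where
  "commutative A m \<longleftrightarrow> (\<forall>x\<in>A. \<forall>y\<in>A. meet m x y = meet m y x)"

definition cd :: "'a set \<Rightarrow> ('a \<Rightarrow> 'a \<Rightarrow> 'a) \<Rightarrow> real" where
  "cd A m = real (card {(x, y) \<in> A \<times> A. meet m x y = meet m y x}) / real (card A) ^ 2"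

text \<open>BCK-union of (A, mA) and (B, mB), assuming A \<inter> B = {0}.\<close>
definition bck_union :: "'a set \<Rightarrow> ('a \<Rightarrow> 'a \<Rightarrow> 'a) \<Rightarrow> 'a set \<Rightarrow> ('a \<Rightarrow> 'a \<Rightarrow> 'a) \<Rightarrow> 'a \<Rightarrow> 'a \<Rightarrow> 'a" where
  "bck_union A mA B mB x y =
     (if x \<in> A \<and> y \<in> A then mA x y else if x \<in> B \<and> y \<in> B then mB x y else x)"

text \<open>The algebra PI on {0,1,2}.\<close>
definition PI_op :: "nat \<Rightarrow> nat \<Rightarrow> nat" where
  "PI_op x y = (if x = 1 \<and> y = 0 then 1 else if x = 2 \<and> (y = 0 \<or> y = 1) then 2 else 0)"

text \<open>The two-element algebra {0,b}.\<close>
definition two_op :: "nat \<Rightarrow> nat \<Rightarrow> nat \<Rightarrow> nat" where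
  "two_op b x y = (if x = b \<and> y = 0 then b else 0)"

text \<open>B_op k is the operation of B_(k+3), carrier {..<k+3}; the new element of 2 is k+3.\<close>
primrec B_op :: "nat \<Rightarrow> nat \<Rightarrow> nat \<Rightarrow> nat" where
  "B_op 0 = PI_op"
| "B_op (Suc k) = bck_union {..<k+3} (B_op k) {0, k+3} (two_op (k+3))"

definition Bn :: "nat \<Rightarrow> nat \<Rightarrow> nat \<Rightarrow> nat" where
  "Bn n = B_op (n - 3)"

end

theory Submission
  imports Defs
begin

definition F :: "nat \<Rightarrow> nat \<Rightarrow> nat" where
  "F x y = (if x = y \<or> x = 0 \<or> (x = 1 \<and> y = 2) then 0 else x)"

lemma B_op_eq: "x < k+3 \<Longrightarrow> y < k+3 \<Longrightarrow> B_op k x y = F x y"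
proof (induction k arbitrary: x y)
  case 0
  then show ?case by (auto simp: PI_op_def F_def)
next
  case (Suc k)
  show ?case
  proof (cases "x < k+3 \<and> y < k+3")
    case True
    then show ?thesis using Suc.IH by (simp add: bck_union_def)
  next
    case False
    then have "x = k+3 \<or> y = k+3" using Suc.prems by auto
    then show ?thesis using Suc.prems False
      by (auto simp: bck_union_def two_op_def F_def)
  qed
qed

lemma Bn_eq: "3 \<le> n \<Longrightarrow> x < n \<Longrightarrow> y < n \<Longrightarrow> Bn n x y = F x y"
  unfolding Bn_def using B_op_eq[of x "n-3" y] by simp

lemma bck_cong:
  assumes "\<And>x y. x\<in>A \<Longrightarrow> y\<in>A \<Longrightarrow> m x y = m' x y"
  shows "bck A m z = bck A m' z"
proof
  assume h: "bck A m z"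
  then have cl: "\<forall>x\<in>A. \<forall>y\<in>A. m x y \<in> A" by (simp add: bck_def)
  show "bck A m' z" using h cl unfolding bck_def by (simp add: assms[symmetric])
next
  assume h: "bck A m' z"
  then have cl: "\<forall>x\<in>A. \<forall>y\<in>A. m' x y \<in> A" by (simp add: bck_def)
  show "bck A m z" using h cl unfolding bck_def by (simp add: assms)
qed

lemma b1: "F (F (F x y) (F x w)) (F w y) = 0"
proof (cases "F x y = 0")
  case True then show ?thesis by (simp add: F_def)
next
  case u: False
  then have u': "F x y = x" "x \<noteq> y" "x \<noteq> 0" "\<not>(x = 1 \<and> y = 2)" by (auto simp: F_def split: if_splits)
  show ?thesis
  proof (cases "F x w = 0")
    case v: True
    then have "x = w \<or> (x = 1 \<and> w = 2)" using u' by (auto simp: F_def split: if_splits)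
    then have "F w y = w" using u' by (auto simp: F_def)
    then show ?thesis using u' v by (simp add: F_def)
  next
    case False
    then have "F x w = x" by (auto simp: F_def split: if_splits)
    then show ?thesis using u' by (simp add: F_def)
  qed
qed
lemma b2: "F (F x (F x y)) y = 0" by (simp add: F_def)
lemma F_bck: assumes n0: "0 < n" shows "bck {..<n} F 0"
  unfolding bck_def
proof (intro conjI ballI impI)
  fix x y assume "x \<in> {..<n}" "y \<in> {..<n}" then show "F x y \<in> {..<n}" by (auto simp: F_def)
next
  fix x y assume "F x y = 0 \<and> F y x = 0" then show "x = y" by (auto simp: F_def split: if_splits)
next
  show "(0::nat) \<in> {..<n}" using n0 by simp
next
  fix x y w :: nat show "F (F (F x y) (F x w)) (F w y) = 0" by (rule b1)
next
  fix x y :: nat show "F (F x (F x y)) y = 0" by (rule b2)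
next
  fix x :: nat show "F x x = 0" by (simp add: F_def)
next
  fix x :: nat show "F 0 x = 0" by (simp add: F_def)
qed

lemma meet_F: "meet F x y = (if y = x \<or> (y = 1 \<and> x = 2) then y else 0)"
  unfolding meet_def F_def by auto

lemma part1:
  assumes "bck A m z" "finite A" "\<not> commutative A m"
  shows "cd A m \<le> (real (card A) ^ 2 - 2) / real (card A) ^ 2"
proof -
  obtain x y where xy: "x \<in> A" "y \<in> A" "meet m x y \<noteq> meet m y x"
    using assms(3) unfolding commutative_def by auto
  have ne: "x \<noteq> y" using xy by auto
  let ?S = "{(x, y) \<in> A \<times> A. meet m x y = meet m y x}"
  have sub: "?S \<subseteq> A \<times> A - {(x,y),(y,x)}" using xy by auto
  have "card ?S \<le> card (A \<times> A - {(x,y),(y,x)})"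
    by (rule card_mono) (use assms(2) sub in auto)
  also have "\<dots> = card A * card A - 2"
    using xy ne assms(2) by (simp add: card_Diff_subset card_cartesian_product)
  finally have c: "card ?S \<le> card A * card A - 2" .
  have pos: "card A > 0" using assms(1,2) unfolding bck_def by (auto simp: card_gt_0_iff)
  have "2 \<le> card A * card A"
  proof -
    have "card {x,y} \<le> card A" using xy assms(2) by (intro card_mono) auto
    then have "2 \<le> card A" using ne by simp
    then have "2*1 \<le> card A * card A" by (intro mult_le_mono) auto
    then show ?thesis by simp
  qed
  then have "real (card A * card A - 2) = real (card A) ^ 2 - 2"
    by (simp add: of_nat_diff power2_eq_square)
  moreover have "real (card ?S) \<le> real (card A * card A - 2)" using c by linarith
  ultimately have "real (card ?S) \<le> real (card A) ^ 2 - 2" by simp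
  then show ?thesis unfolding cd_def using pos
    by (simp add: divide_right_mono)
qed

lemma part2:
  assumes n: "3 \<le> n"
  shows "bck {..<n} (Bn n) 0 \<and> \<not> commutative {..<n} (Bn n) \<and> card {..<n} = n \<and>
            cd {..<n} (Bn n) = (real n ^ 2 - 2) / real n ^ 2"
proof -
  have eq: "\<And>x y. x \<in> {..<n} \<Longrightarrow> y \<in> {..<n} \<Longrightarrow> Bn n x y = F x y"
    using Bn_eq n by auto
  have meq: "\<And>x y. x \<in> {..<n} \<Longrightarrow> y \<in> {..<n} \<Longrightarrow> meet (Bn n) x y = meet F x y"
  proof -
    fix x y assume a: "x \<in> {..<n}" "y \<in> {..<n}"
    have "F y x \<in> {..<n}" using a by (auto simp: F_def)
    then show "meet (Bn n) x y = meet F x y" using a eq unfolding meet_def by simp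
  qed
  have b: "bck {..<n} (Bn n) 0" using bck_cong[of "{..<n}" "Bn n" F 0] eq F_bck[of n] n by simp
  have nc: "\<not> commutative {..<n} (Bn n)"
  proof -
    have "meet (Bn n) 1 2 \<noteq> meet (Bn n) 2 1"
      using meq[of 1 2] meq[of 2 1] n by (simp add: meet_F)
    moreover have "(1::nat) \<in> {..<n}" "(2::nat) \<in> {..<n}" using n by auto
    ultimately show ?thesis unfolding commutative_def by blast
  qed
  have S: "{(x, y) \<in> {..<n} \<times> {..<n}. meet (Bn n) x y = meet (Bn n) y x}
      = {..<n} \<times> {..<n} - {(1,2),(2,1)}"
    using meq by (auto simp: meet_F)
  have c0: "card ({..<n} \<times> {..<n} - {(1::nat,2::nat),(2,1)}) = n * n - 2"
    using n by (simp add: card_Diff_subset card_cartesian_product)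
  have cS: "card {(x, y) \<in> {..<n} \<times> {..<n}. meet (Bn n) x y = meet (Bn n) y x} = n * n - 2"
    unfolding S by (rule c0)
  moreover have "2 \<le> n * n"
  proof -
    have "2*1 \<le> n * n" using n by (intro mult_le_mono) auto
    then show ?thesis by simp
  qed
  ultimately have "real (card {(x, y) \<in> {..<n} \<times> {..<n}. meet (Bn n) x y = meet (Bn n) y x}) = real n ^ 2 - 2"
    by (simp only: power2_eq_square of_nat_diff of_nat_mult of_nat_numeral)
  then show ?thesis using b nc unfolding cd_def by simp
qed

theorem theorem5p3:
  shows "(\<forall>(A::'a set) m z. bck A m z \<and> finite A \<and> \<not> commutative A m \<longrightarrow>
            cd A m \<le> (real (card A) ^ 2 - 2) / real (card A) ^ 2)
       \<and> (\<forall>n::nat. n \<ge> 3 \<longrightarrow>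
            bck {..<n} (Bn n) 0 \<and> \<not> commutative {..<n} (Bn n) \<and> card {..<n} = n \<and>
            cd {..<n} (Bn n) = (real n ^ 2 - 2) / real n ^ 2)
       \<and> (\<forall>\<epsilon>::real. \<epsilon> > 0 \<longrightarrow>
            (\<exists>(A::nat set) m z. bck A m z \<and> finite A \<and> 1 - \<epsilon> < cd A m \<and> cd A m < 1))"
proof -
  have P1: "\<forall>(A::'a set) m z. bck A m z \<and> finite A \<and> \<not> commutative A m \<longrightarrow>
            cd A m \<le> (real (card A) ^ 2 - 2) / real (card A) ^ 2"
  proof (intro allI impI)
    fix A :: "'a set" and m z
    assume "bck A m z \<and> finite A \<and> \<not> commutative A m"
    then show "cd A m \<le> (real (card A) ^ 2 - 2) / real (card A) ^ 2" using part1[of A m z] by simp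
  qed
  have P2: "\<forall>n::nat. n \<ge> 3 \<longrightarrow>
            bck {..<n} (Bn n) 0 \<and> \<not> commutative {..<n} (Bn n) \<and> card {..<n} = n \<and>
            cd {..<n} (Bn n) = (real n ^ 2 - 2) / real n ^ 2"
    by (intro allI impI) (rule part2)
  have P3: "\<forall>\<epsilon>::real. \<epsilon> > 0 \<longrightarrow>
            (\<exists>(A::nat set) m z. bck A m z \<and> finite A \<and> 1 - \<epsilon> < cd A m \<and> cd A m < 1)"
  proof (intro allI impI)
  fix e :: real assume e: "e > 0"
  obtain k :: nat where k: "2 / e < real k" using reals_Archimedean2 by blast
  define n where "n = k + 3"
  have n3: "3 \<le> n" by (simp add: n_def)
  have nk: "2 / e < real n" using k by (simp add: n_def)
  have np: "real n > 0" using n3 by simp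
  have "2 < real n * e" using nk e by (simp add: pos_divide_less_eq)
  moreover have "real n \<le> real n ^ 2" using n3 by (simp add: power2_eq_square)
  then have "real n * e \<le> real n ^ 2 * e" using e by (simp add: mult_right_mono)
  ultimately have "2 < e * real n ^ 2" by (simp add: mult.commute)
  then have lt: "2 / real n ^ 2 < e" using np by (simp add: divide_less_eq mult.commute)
  have c: "cd {..<n} (Bn n) = 1 - 2 / real n ^ 2"
    using part2[OF n3] np by (simp add: diff_divide_distrib)
  show "\<exists>(A::nat set) m z. bck A m z \<and> finite A \<and> 1 - e < cd A m \<and> cd A m < 1"
    using part2[OF n3] c lt np by (intro exI[of _ "{..<n}"] exI[of _ "Bn n"] exI[of _ 0]) auto
  qed
  show ?thesis by (rule conjI[OF P1 conjI[OF P2 P3]])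
qed

end
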